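(* Let $\kappa$ be an uncountable regular cardinal. The following are equivalent: (1) $\diamondsuit_\kappa$ holds; (2) there is a joint diamond sequence of length $\kappa$ for $\kappa$; (3) there is a joint diamond sequence of length $2^\kappa$ for $\kappa$; (4) there exists a $\diamondsuit_\kappa$-tree.
   Context: A filter on $\kappa$ is normal if it is closed under diagonal intersections of $\kappa$-sequences of its members, and uniform if it contains all cobounded subsets of $\kappa$. A $\kappa$-list is a function $d\colon\kappa\to\mathcal{P}(\kappa)$ with $d(\alpha)\subseteq\alpha$ for all $\alpha$. A joint diamond sequence of length $\lambda$ for $\kappa$ is a sequence $\langle d_\alpha;\alpha<\lambda\rangle$ of $\kappa$-lists such that for every sequence $\langle a_\alpha;\alpha<\lambda\rangle$ of subsets of $\kappa$ there is a proper normal uniform filter $\mathcal{F}$ on $\kappa$ with $\{\xi<\kappa : d_\alpha(\xi)=a_\alpha\cap\xi\}\in\mathcal{F}$ for every $\alpha<\lambda$. A $\diamondsuit_\kappa$-tree is a function $D\colon {}^{<\kappa}2\to\mathcal{P}(\kappa)$ such that for every sequence $\langle a_s; s\in{}^\kappa 2\rangle$ of subsets of $\kappa$ there is a proper normal uniform filter on $\kappa$ containing all the sets $S_s=\{\xi<\kappa : D(s\restriction\xi)=a_s\cap\xi\}$, $s\in{}^\kappa2$. *)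

theory Defs
  imports Main "HOL-Library.Countable_Set"
begin

text \<open>The cardinal kappa is represented as the order type of a type 'a of class wellorder:
  elements of 'a are the ordinals below kappa, the ordinal xi is identified with the
  initial segment {..<xi}, and subsets of kappa are sets of type 'a set.\<close>

definition ord_rel :: "('a::wellorder) rel" where
  "ord_rel = {(x, y). x \<le> y}"

definition uncountable_regular_cardinal :: "('a::wellorder) itself \<Rightarrow> bool" where
  "uncountable_regular_cardinal _ \<longleftrightarrow>
     Card_order (ord_rel :: 'a rel) \<and> regularCard (ord_rel :: 'a rel) \<and>
     \<not> countable (UNIV :: 'a set)"

definition is_filter :: "('a::wellorder) set set \<Rightarrow> bool" where
  "is_filter F \<longleftrightarrow> UNIV \<in> F \<and>
     (\<forall>X Y. X \<in> F \<longrightarrow> X \<subseteq> Y \<longrightarrow> Y \<in> F) \<and>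
     (\<forall>X Y. X \<in> F \<longrightarrow> Y \<in> F \<longrightarrow> X \<inter> Y \<in> F)"

definition proper_filter :: "('a::wellorder) set set \<Rightarrow> bool" where
  "proper_filter F \<longleftrightarrow> is_filter F \<and> {} \<notin> F"

definition diag_inter :: "('a::wellorder \<Rightarrow> 'a set) \<Rightarrow> 'a set" where
  "diag_inter X = {\<xi>. \<forall>\<alpha><\<xi>. \<xi> \<in> X \<alpha>}"

definition normal_filter :: "('a::wellorder) set set \<Rightarrow> bool" where
  "normal_filter F \<longleftrightarrow> (\<forall>X. (\<forall>\<alpha>. X \<alpha> \<in> F) \<longrightarrow> diag_inter X \<in> F)"

definition cobounded :: "('a::wellorder) set \<Rightarrow> bool" where
  "cobounded X \<longleftrightarrow> (\<exists>\<beta>. \<forall>\<gamma>. \<gamma> \<notin> X \<longrightarrow> \<gamma> < \<beta>)"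

definition uniform_filter :: "('a::wellorder) set set \<Rightarrow> bool" where
  "uniform_filter F \<longleftrightarrow> (\<forall>X. cobounded X \<longrightarrow> X \<in> F)"

definition pnu_filter :: "('a::wellorder) set set \<Rightarrow> bool" where
  "pnu_filter F \<longleftrightarrow> proper_filter F \<and> normal_filter F \<and> uniform_filter F"

definition kappa_list :: "('a::wellorder \<Rightarrow> 'a set) \<Rightarrow> bool" where
  "kappa_list d \<longleftrightarrow> (\<forall>\<alpha>. d \<alpha> \<subseteq> {..<\<alpha>})"

text \<open>Joint diamond sequence indexed by a set of type 'i (its length is the cardinality of 'i).\<close>
definition joint_diamond :: "('i \<Rightarrow> 'a::wellorder \<Rightarrow> 'a set) \<Rightarrow> bool" where
  "joint_diamond d \<longleftrightarrow> (\<forall>i. kappa_list (d i)) \<and>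
     (\<forall>a :: 'i \<Rightarrow> 'a set. \<exists>F. pnu_filter F \<and>
        (\<forall>i. {\<xi>. d i \<xi> = a i \<inter> {..<\<xi>}} \<in> F))"

definition unbounded :: "('a::wellorder) set \<Rightarrow> bool" where
  "unbounded C \<longleftrightarrow> (\<forall>\<beta>. \<exists>\<gamma>\<in>C. \<beta> \<le> \<gamma>)"

text \<open>Closed: every nonzero alpha below kappa in which C is unbounded (necessarily a limit) lies in C.\<close>
definition closed_set :: "('a::wellorder) set \<Rightarrow> bool" where
  "closed_set C \<longleftrightarrow> (\<forall>\<alpha>. (\<exists>\<beta>. \<beta> < \<alpha>) \<and> (\<forall>\<beta><\<alpha>. \<exists>\<gamma>\<in>C. \<beta> < \<gamma> \<and> \<gamma> < \<alpha>) \<longrightarrow> \<alpha> \<in> C)"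

definition club :: "('a::wellorder) set \<Rightarrow> bool" where
  "club C \<longleftrightarrow> closed_set C \<and> unbounded C"

definition stationary :: "('a::wellorder) set \<Rightarrow> bool" where
  "stationary S \<longleftrightarrow> (\<forall>C. club C \<longrightarrow> S \<inter> C \<noteq> {})"

definition diamond :: "('a::wellorder) itself \<Rightarrow> bool" where
  "diamond _ \<longleftrightarrow> (\<exists>d :: 'a \<Rightarrow> 'a set. kappa_list d \<and>
     (\<forall>A. stationary {\<alpha>. A \<inter> {..<\<alpha>} = d \<alpha>}))"

text \<open>A node s of the tree of binary sequences of length less than kappa is coded by a pair
  (xi, X) with X a subset of {..<xi} (s = characteristic function of X on xi); a branch
  s in 2^kappa is coded by a subset s of kappa, and s restricted to xi is (xi, s \<inter> {..<xi}).
  Values of D at pairs (xi, X) with X not a subset of {..<xi} are irrelevant.\<close>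
definition diamond_tree :: "('a::wellorder \<Rightarrow> 'a set \<Rightarrow> 'a set) \<Rightarrow> bool" where
  "diamond_tree D \<longleftrightarrow> (\<forall>a :: 'a set \<Rightarrow> 'a set. \<exists>F. pnu_filter F \<and>
     (\<forall>s. {\<xi>. D \<xi> (s \<inter> {..<\<xi>}) = a s \<inter> {..<\<xi>}} \<in> F))"

end

theory Submission
  imports Defs
begin
unbundle cardinal_syntax

context
  assumes U: "uncountable_regular_cardinal TYPE('a::wellorder)"
begin

lemma ord_rel_in[simp]: "(x, y) \<in> (ord_rel::'a rel) \<longleftrightarrow> x \<le> y"
  by (simp add: ord_rel_def)

lemma Field_ord_rel[simp]: "Field (ord_rel::'a rel) = UNIV"
  unfolding Field_def ord_rel_def by auto

lemma CO: "Card_order (ord_rel::'a rel)"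
  using U unfolding uncountable_regular_cardinal_def by auto

lemma REG: "regularCard (ord_rel::'a rel)"
  using U unfolding uncountable_regular_cardinal_def by auto

lemma UNC: "\<not> countable (UNIV::'a set)"
  using U unfolding uncountable_regular_cardinal_def by auto

lemma INF: "\<not> finite (UNIV::'a set)"
  using UNC countable_finite by blast

lemma no_max: "\<exists>y. (x::'a) < y"
proof -
  have "\<exists>b \<in> Field (ord_rel::'a rel). x \<noteq> b \<and> (x, b) \<in> (ord_rel::'a rel)"
    by (rule infinite_Card_order_limit[OF CO]) (use INF in auto)
  thus ?thesis by (auto simp: less_le)
qed

lemma UNIV_iso: "|UNIV::'a set| =o (ord_rel::'a rel)"
  using card_of_Field_ordIso[OF CO] by simp

lemma small_bounded:
  assumes "|X| <o |UNIV::'a set|"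
  shows "\<exists>u. \<forall>x\<in>X. x < (u::'a)"
proof -
  have "\<not> cofinal X (ord_rel::'a rel)"
  proof
    assume c: "cofinal X (ord_rel::'a rel)"
    have "|X| =o (ord_rel::'a rel)" using REG[unfolded regularCard_def, rule_format, of X] c by simp
    hence "|X| =o |UNIV::'a set|" by (rule ordIso_transitive[OF _ ordIso_symmetric[OF UNIV_iso]])
    with not_ordLess_ordIso[OF assms] show False by simp
  qed
  then obtain a where a: "\<forall>b\<in>X. \<not> (a \<noteq> b \<and> a \<le> b)"
    unfolding cofinal_def Field_ord_rel ord_rel_in by blast
  obtain u where u: "a < u" using no_max by blast
  have "x < u" if "x \<in> X" for x
  proof -
    have "x \<le> a" using a that by (cases "a = x") (auto simp: not_le)
    thus ?thesis using u by (rule le_less_trans)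
  qed
  thus ?thesis by blast
qed

lemma atMost_small: "|{..(\<eta>::'a)}| <o |UNIV::'a set|"
proof -
  obtain s where s: "\<eta> < s" using no_max by blast
  have "{..\<eta>} \<subseteq> underS (ord_rel::'a rel) s"
    using s unfolding underS_def by auto
  hence "|{..\<eta>}| \<le>o |underS (ord_rel::'a rel) s|" by (rule card_of_mono1)
  moreover have "|underS (ord_rel::'a rel) s| <o (ord_rel::'a rel)"
    using card_of_underS[OF CO] by simp
  ultimately show ?thesis by (rule ordLess_ordIso_trans[OF ordLeq_ordLess_trans ordIso_symmetric[OF UNIV_iso]])
qed

lemma bound_fun: "\<exists>u. \<forall>\<gamma>\<le>(\<eta>::'a). (g \<gamma> :: 'a) < u"
proof -
  have "|g ` {..\<eta>}| <o |UNIV::'a set|"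
    by (rule ordLeq_ordLess_trans[OF card_of_image atMost_small])
  then obtain u where "\<forall>x\<in>g ` {..\<eta>}. x < u" using small_bounded by blast
  thus ?thesis by auto
qed

lemma nat_bounded: "\<exists>u. \<forall>n::nat. (b n :: 'a) < u"
proof -
  have "\<not> |UNIV::'a set| \<le>o |UNIV::nat set|"
    using UNC unfolding countable_def card_of_ordLeq[symmetric] by auto
  hence "|UNIV::nat set| <o |UNIV::'a set|"
    by (rule not_ordLeq_iff_ordLess[OF card_of_Well_order card_of_Well_order, THEN iffD1])
  hence "|range b| <o |UNIV::'a set|"
    using ordLeq_ordLess_trans[OF card_of_image[of b "UNIV::nat set"]] by simp
  then obtain u where "\<forall>x\<in>range b. x < u" using small_bounded by blast
  thus ?thesis by auto
qed


lemma iter_mono: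
  assumes h: "\<forall>\<eta>. \<eta> < h \<eta>" and "m \<le> n"
  shows "(h^^m) (\<beta>::'a) \<le> (h^^n) \<beta>"
  using assms(2)
proof (induction n)
  case 0 thus ?case by simp
next
  case (Suc n)
  show ?case
  proof (cases "m = Suc n")
    case True thus ?thesis by simp
  next
    case False
    hence "(h^^m) \<beta> \<le> (h^^n) \<beta>" using Suc by simp
    also have "\<dots> \<le> (h^^Suc n) \<beta>" using h[rule_format, of "(h^^n) \<beta>"] by simp
    finally show ?thesis .
  qed
qed

lemma omega_sup:
  assumes h: "\<forall>\<eta>. \<eta> < h \<eta>"
  shows "\<exists>\<xi>. (\<forall>n. (h^^n) (\<beta>::'a) < \<xi>) \<and> (\<forall>y<\<xi>. \<exists>n. y < (h^^n) \<beta>)"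
proof -
  obtain u where u: "\<forall>n::nat. (h^^n) \<beta> < u" using nat_bounded[of "\<lambda>n. (h^^n) \<beta>"] by blast
  define \<xi> where "\<xi> = (LEAST \<xi>. \<forall>n. (h^^n) \<beta> < \<xi>)"
  have 1: "\<forall>n. (h^^n) \<beta> < \<xi>" unfolding \<xi>_def by (rule LeastI[of _ u]) (rule u)
  have 2: "\<exists>n. y < (h^^n) \<beta>" if "y < \<xi>" for y
  proof -
    have "\<not> (\<forall>n. (h^^n) \<beta> < y)" using not_less_Least that unfolding \<xi>_def by blast
    then obtain n where "y \<le> (h^^n) \<beta>" by (auto simp: not_less)
    also have "\<dots> < (h^^Suc n) \<beta>" using h by simp
    finally show ?thesis by blast
  qed
  show ?thesis using 1 2 by blast
qed

lemma club_next:
  assumes "club C"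
  shows "\<exists>\<gamma>\<in>C. (\<eta>::'a) < \<gamma>"
proof -
  obtain s where s: "\<eta> < s" using no_max by blast
  obtain \<gamma> where "\<gamma> \<in> C" "s \<le> \<gamma>" using assms unfolding club_def unbounded_def by blast
  thus ?thesis using s by (blast intro: less_le_trans)
qed

lemma club_gt: "club {\<xi>::'a. \<beta> < \<xi>}"
  unfolding club_def
proof
  show "closed_set {\<xi>. \<beta> < \<xi>}"
    unfolding closed_set_def
  proof (intro allI impI)
    fix \<alpha> :: 'a assume a: "(\<exists>\<beta>. \<beta> < \<alpha>) \<and> (\<forall>\<beta>'<\<alpha>. \<exists>\<gamma>\<in>{\<xi>. \<beta> < \<xi>}. \<beta>' < \<gamma> \<and> \<gamma> < \<alpha>)"
    then obtain b where "b < \<alpha>" by blast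
    then obtain \<gamma> where "\<beta> < \<gamma>" "\<gamma> < \<alpha>" using a by blast
    thus "\<alpha> \<in> {\<xi>. \<beta> < \<xi>}" by simp
  qed
next
  show "unbounded {\<xi>. \<beta> < \<xi>}"
    unfolding unbounded_def
  proof
    fix b :: 'a
    obtain s where "max \<beta> b < s" using no_max by blast
    thus "\<exists>\<gamma>\<in>{\<xi>. \<beta> < \<xi>}. b \<le> \<gamma>" by auto
  qed
qed

lemma club_Int:
  assumes C: "club C" and D: "club D"
  shows "club (C \<inter> (D::'a set))"
  unfolding club_def
proof
  show "closed_set (C \<inter> D)"
    using C D unfolding club_def closed_set_def by blast
next
  show "unbounded (C \<inter> D)"
    unfolding unbounded_def
  proof
    fix \<beta> :: 'a
    define fC where "fC = (\<lambda>\<eta>. SOME \<gamma>. \<gamma> \<in> C \<and> (\<eta>::'a) < \<gamma>)"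
    define fD where "fD = (\<lambda>\<eta>. SOME \<gamma>. \<gamma> \<in> D \<and> (\<eta>::'a) < \<gamma>)"
    have fC: "fC \<eta> \<in> C \<and> \<eta> < fC \<eta>" for \<eta>
      unfolding fC_def by (rule someI_ex) (use club_next[OF C] in blast)
    have fD: "fD \<eta> \<in> D \<and> \<eta> < fD \<eta>" for \<eta>
      unfolding fD_def by (rule someI_ex) (use club_next[OF D] in blast)
    define h where "h = (\<lambda>\<eta>. fD (fC \<eta>))"
    have h: "\<forall>\<eta>. \<eta> < h \<eta>" unfolding h_def using fC fD less_trans by blast
    obtain \<xi> where x1: "\<forall>n. (h^^n) \<beta> < \<xi>" and x2: "\<forall>y<\<xi>. \<exists>n. y < (h^^n) \<beta>"
      using omega_sup[OF h] by blast
    have ne: "\<exists>b. b < \<xi>" using x1 by blast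
    have "\<xi> \<in> C"
      using C unfolding club_def closed_set_def
    proof (elim conjE allE impE)
      show "(\<exists>b. b < \<xi>) \<and> (\<forall>b<\<xi>. \<exists>\<gamma>\<in>C. b < \<gamma> \<and> \<gamma> < \<xi>)"
      proof (intro conjI allI impI ne)
        fix y assume "y < \<xi>"
        then obtain n where n: "y < (h^^n) \<beta>" using x2 by blast
        have "fC ((h^^n) \<beta>) < h ((h^^n) \<beta>)" unfolding h_def using fD by blast
        also have "\<dots> < \<xi>" using x1[rule_format, of "Suc n"] by simp
        finally show "\<exists>\<gamma>\<in>C. y < \<gamma> \<and> \<gamma> < \<xi>" using fC n less_trans by blast
      qed
    qed
    moreover have "\<xi> \<in> D"
      using D unfolding club_def closed_set_def
    proof (elim conjE allE impE)
      show "(\<exists>b. b < \<xi>) \<and> (\<forall>b<\<xi>. \<exists>\<gamma>\<in>D. b < \<gamma> \<and> \<gamma> < \<xi>)"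
      proof (intro conjI allI impI ne)
        fix y assume "y < \<xi>"
        then obtain n where n: "y < (h^^n) \<beta>" using x2 by blast
        have "(h^^n) \<beta> < (h^^Suc n) \<beta>" using h by simp
        moreover have "(h^^Suc n) \<beta> \<in> D" unfolding h_def using fD by simp
        ultimately show "\<exists>\<gamma>\<in>D. y < \<gamma> \<and> \<gamma> < \<xi>" using n x1 less_trans by blast
      qed
    qed
    moreover have "\<beta> \<le> \<xi>" using x1[rule_format, of 0] by simp
    ultimately show "\<exists>\<gamma>\<in>C \<inter> D. \<beta> \<le> \<gamma>" by blast
  qed
qed


lemma club_diag:
  assumes Cs: "\<forall>\<beta>. club (Cs \<beta>)"
  shows "club {\<xi>::'a. \<forall>\<beta><\<xi>. \<xi> \<in> Cs \<beta>}"
  unfolding club_def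
proof
  show "closed_set {\<xi>::'a. \<forall>\<beta><\<xi>. \<xi> \<in> Cs \<beta>}"
    unfolding closed_set_def
  proof (intro allI impI)
    fix \<alpha> :: 'a
    assume a: "(\<exists>\<beta>. \<beta> < \<alpha>) \<and> (\<forall>\<beta><\<alpha>. \<exists>\<gamma>\<in>{\<xi>. \<forall>\<beta><\<xi>. \<xi> \<in> Cs \<beta>}. \<beta> < \<gamma> \<and> \<gamma> < \<alpha>)"
    show "\<alpha> \<in> {\<xi>. \<forall>\<beta><\<xi>. \<xi> \<in> Cs \<beta>}"
    proof (simp, intro allI impI)
      fix \<beta> assume b: "\<beta> < \<alpha>"
      have cl: "closed_set (Cs \<beta>)" using Cs unfolding club_def by blast
      show "\<alpha> \<in> Cs \<beta>"
        using cl unfolding closed_set_def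
      proof (elim allE impE)
        show "(\<exists>b. b < \<alpha>) \<and> (\<forall>b<\<alpha>. \<exists>\<gamma>\<in>Cs \<beta>. b < \<gamma> \<and> \<gamma> < \<alpha>)"
        proof (intro conjI allI impI)
          show "\<exists>b. b < \<alpha>" using b by blast
          fix y assume "y < \<alpha>"
          hence "max y \<beta> < \<alpha>" using b by simp
          then obtain \<gamma> where g: "\<forall>\<beta><\<gamma>. \<gamma> \<in> Cs \<beta>" "max y \<beta> < \<gamma>" "\<gamma> < \<alpha>"
            using a by blast
          thus "\<exists>\<gamma>\<in>Cs \<beta>. y < \<gamma> \<and> \<gamma> < \<alpha>" by auto
        qed
      qed
    qed
  qed
next
  show "unbounded {\<xi>::'a. \<forall>\<beta><\<xi>. \<xi> \<in> Cs \<beta>}"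
    unfolding unbounded_def
  proof
    fix \<beta>0 :: 'a
    define nx where "nx = (\<lambda>\<beta> \<eta>. SOME \<gamma>. \<gamma> \<in> Cs \<beta> \<and> (\<eta>::'a) < \<gamma>)"
    have nx: "nx \<beta> \<eta> \<in> Cs \<beta> \<and> \<eta> < nx \<beta> \<eta>" for \<beta> \<eta>
      unfolding nx_def by (rule someI_ex) (use club_next Cs in blast)
    define h where "h = (\<lambda>\<eta>. SOME u. \<forall>\<beta>\<le>\<eta>. nx \<beta> \<eta> < (u::'a))"
    have hb: "\<forall>\<beta>\<le>\<eta>. nx \<beta> \<eta> < h \<eta>" for \<eta>
      unfolding h_def by (rule someI_ex) (rule bound_fun)
    have h: "\<forall>\<eta>. \<eta> < h \<eta>"
    proof
      fix \<eta> show "\<eta> < h \<eta>" using nx[of \<eta> \<eta>] hb[of \<eta>] by (meson order_refl less_trans)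
    qed
    obtain \<xi> where x1: "\<forall>n. (h^^n) \<beta>0 < \<xi>" and x2: "\<forall>y<\<xi>. \<exists>n. y < (h^^n) \<beta>0"
      using omega_sup[OF h] by blast
    have "\<xi> \<in> Cs \<beta>" if b: "\<beta> < \<xi>" for \<beta>
    proof -
      obtain m where m: "\<beta> < (h^^m) \<beta>0" using x2 b by blast
      have cl: "closed_set (Cs \<beta>)" using Cs unfolding club_def by blast
      show "\<xi> \<in> Cs \<beta>"
        using cl unfolding closed_set_def
      proof (elim allE impE)
        show "(\<exists>b. b < \<xi>) \<and> (\<forall>b<\<xi>. \<exists>\<gamma>\<in>Cs \<beta>. b < \<gamma> \<and> \<gamma> < \<xi>)"
        proof (intro conjI allI impI)
          show "\<exists>b. b < \<xi>" using b by blast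
          fix y assume "y < \<xi>"
          then obtain n where n: "y < (h^^n) \<beta>0" using x2 by blast
          define k where "k = max n m"
          have kn: "(h^^n) \<beta>0 \<le> (h^^k) \<beta>0" using iter_mono[OF h] k_def by simp
          have km: "(h^^m) \<beta>0 \<le> (h^^k) \<beta>0" using iter_mono[OF h] k_def by simp
          have "\<beta> \<le> (h^^k) \<beta>0" using m km by simp
          hence "nx \<beta> ((h^^k) \<beta>0) < h ((h^^k) \<beta>0)" using hb by blast
          also have "\<dots> < \<xi>" using x1[rule_format, of "Suc k"] by simp
          finally have 1: "nx \<beta> ((h^^k) \<beta>0) < \<xi>" .
          have 2: "y < nx \<beta> ((h^^k) \<beta>0)" using n kn nx[of \<beta> "(h^^k) \<beta>0"] by (metis less_le_trans less_trans)
          show "\<exists>\<gamma>\<in>Cs \<beta>. y < \<gamma> \<and> \<gamma> < \<xi>" using 1 2 nx by blast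
        qed
      qed
    qed
    moreover have "\<beta>0 \<le> \<xi>" using x1[rule_format, of 0] by simp
    ultimately show "\<exists>\<gamma>\<in>{\<xi>. \<forall>\<beta><\<xi>. \<xi> \<in> Cs \<beta>}. \<beta>0 \<le> \<gamma>" by blast
  qed
qed

lemma club_closure2:
  "club {\<xi>::'a. \<forall>\<alpha><\<xi>. \<forall>\<beta><\<xi>. (f \<alpha> \<beta> :: 'a) < \<xi>}"
  unfolding club_def
proof
  show "closed_set {\<xi>::'a. \<forall>\<alpha><\<xi>. \<forall>\<beta><\<xi>. f \<alpha> \<beta> < \<xi>}"
    unfolding closed_set_def
  proof (intro allI impI)
    fix \<alpha>0 :: 'a
    assume a: "(\<exists>\<beta>. \<beta> < \<alpha>0) \<and> (\<forall>\<beta><\<alpha>0. \<exists>\<gamma>\<in>{\<xi>. \<forall>\<alpha><\<xi>. \<forall>\<beta><\<xi>. f \<alpha> \<beta> < \<xi>}. \<beta> < \<gamma> \<and> \<gamma> < \<alpha>0)"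
    show "\<alpha>0 \<in> {\<xi>. \<forall>\<alpha><\<xi>. \<forall>\<beta><\<xi>. f \<alpha> \<beta> < \<xi>}"
    proof (simp, intro allI impI)
      fix x y assume "x < \<alpha>0" "y < \<alpha>0"
      hence "max x y < \<alpha>0" by simp
      then obtain \<gamma> where g: "\<forall>\<alpha><\<gamma>. \<forall>\<beta><\<gamma>. f \<alpha> \<beta> < \<gamma>" "max x y < \<gamma>" "\<gamma> < \<alpha>0"
        using a by blast
      hence "f x y < \<gamma>" by simp
      thus "f x y < \<alpha>0" using g(3) by simp
    qed
  qed
next
  show "unbounded {\<xi>::'a. \<forall>\<alpha><\<xi>. \<forall>\<beta><\<xi>. f \<alpha> \<beta> < \<xi>}"
    unfolding unbounded_def
  proof
    fix \<beta>0 :: 'a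
    have ex: "\<exists>u. \<eta> < u \<and> (\<forall>\<alpha>\<le>\<eta>. \<forall>\<beta>\<le>\<eta>. f \<alpha> \<beta> < u)" for \<eta>
    proof -
      define u1 where "u1 = (\<lambda>\<alpha>. SOME u. \<forall>\<beta>\<le>\<eta>. f \<alpha> \<beta> < (u::'a))"
      have u1: "\<forall>\<beta>\<le>\<eta>. f \<alpha> \<beta> < u1 \<alpha>" for \<alpha>
        unfolding u1_def by (rule someI_ex) (rule bound_fun)
      obtain u2 where u2: "\<forall>\<alpha>\<le>\<eta>. u1 \<alpha> < u2" using bound_fun by blast
      obtain s where s: "max u2 \<eta> < s" using no_max by blast
      have "\<forall>\<alpha>\<le>\<eta>. \<forall>\<beta>\<le>\<eta>. f \<alpha> \<beta> < s"
        using u1 u2 s by (meson less_trans max.strict_boundedE)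
      thus ?thesis using s by auto
    qed
    define h where "h = (\<lambda>\<eta>. SOME u. \<eta> < u \<and> (\<forall>\<alpha>\<le>\<eta>. \<forall>\<beta>\<le>\<eta>. f \<alpha> \<beta> < (u::'a)))"
    have hb: "\<eta> < h \<eta> \<and> (\<forall>\<alpha>\<le>\<eta>. \<forall>\<beta>\<le>\<eta>. f \<alpha> \<beta> < h \<eta>)" for \<eta>
      unfolding h_def by (rule someI_ex) (rule ex)
    have h: "\<forall>\<eta>. \<eta> < h \<eta>" using hb by blast
    obtain \<xi> where x1: "\<forall>n. (h^^n) \<beta>0 < \<xi>" and x2: "\<forall>y<\<xi>. \<exists>n. y < (h^^n) \<beta>0"
      using omega_sup[OF h] by blast
    have "f x y < \<xi>" if xy: "x < \<xi>" "y < \<xi>" for x y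
    proof -
      obtain n where n: "x < (h^^n) \<beta>0" using x2 xy by blast
      obtain m where m: "y < (h^^m) \<beta>0" using x2 xy by blast
      define k where "k = max n m"
      have kn: "(h^^n) \<beta>0 \<le> (h^^k) \<beta>0" using iter_mono[OF h] k_def by simp
      have km: "(h^^m) \<beta>0 \<le> (h^^k) \<beta>0" using iter_mono[OF h] k_def by simp
      have "f x y < h ((h^^k) \<beta>0)" using hb n m kn km by simp
      also have "\<dots> < \<xi>" using x1[rule_format, of "Suc k"] by simp
      finally show ?thesis .
    qed
    moreover have "\<beta>0 \<le> \<xi>" using x1[rule_format, of 0] by simp
    ultimately show "\<exists>\<gamma>\<in>{\<xi>. \<forall>\<alpha><\<xi>. \<forall>\<beta><\<xi>. f \<alpha> \<beta> < \<xi>}. \<beta>0 \<le> \<gamma>" by blast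
  qed
qed


lemma pairing: "\<exists>\<pi>::'a \<times> 'a \<Rightarrow> 'a. inj \<pi>"
proof -
  have "|(UNIV::'a set) \<times> (UNIV::'a set)| =o |UNIV::'a set|" by (rule card_of_Times_same_infinite[OF INF])
  hence "|(UNIV::'a set) \<times> (UNIV::'a set)| \<le>o |UNIV::'a set|" using ordIso_iff_ordLeq by blast
  then obtain f :: "'a \<times> 'a \<Rightarrow> 'a" where "inj_on f (UNIV \<times> (UNIV::'a set))"
    using card_of_ordLeq[of "UNIV \<times> (UNIV::'a set)" "UNIV::'a set"] by auto
  thus ?thesis by auto
qed

lemma diamond2:
  assumes "diamond TYPE('a)"
  shows "\<exists>G::'a \<Rightarrow> ('a \<times> 'a) set. \<forall>A. stationary {\<xi>. G \<xi> = A \<inter> ({..<\<xi>} \<times> {..<\<xi>})}"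
proof -
  obtain d :: "'a \<Rightarrow> 'a set" where d: "\<forall>A. stationary {\<alpha>. A \<inter> {..<\<alpha>} = d \<alpha>}"
    using assms unfolding diamond_def by blast
  obtain \<pi> :: "'a \<times> 'a \<Rightarrow> 'a" where pi: "inj \<pi>" using pairing by blast
  define G where "G = (\<lambda>\<xi>. {p \<in> {..<\<xi>} \<times> {..<\<xi>}. \<pi> p \<in> d \<xi>})"
  have "stationary {\<xi>. G \<xi> = A \<inter> ({..<\<xi>} \<times> {..<\<xi>})}" for A
    unfolding stationary_def
  proof (intro allI impI)
    fix C :: "'a set" assume C: "club C"
    define K where "K = {\<xi>::'a. \<forall>\<alpha><\<xi>. \<forall>\<beta><\<xi>. \<pi> (\<alpha>, \<beta>) < \<xi>}"
    have K: "club K" unfolding K_def by (rule club_closure2)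
    have "{\<alpha>. \<pi> ` A \<inter> {..<\<alpha>} = d \<alpha>} \<inter> (C \<inter> K) \<noteq> {}"
      using d club_Int[OF C K] unfolding stationary_def by blast
    then obtain \<xi> where x: "\<pi> ` A \<inter> {..<\<xi>} = d \<xi>" "\<xi> \<in> C" "\<xi> \<in> K" by blast
    have "G \<xi> = A \<inter> ({..<\<xi>} \<times> {..<\<xi>})"
    proof (intro set_eqI iffI)
      fix p assume p: "p \<in> G \<xi>"
      hence "\<pi> p \<in> \<pi> ` A" using x(1) unfolding G_def by blast
      hence "p \<in> A" using pi by (simp add: inj_image_mem_iff)
      thus "p \<in> A \<inter> ({..<\<xi>} \<times> {..<\<xi>})" using p unfolding G_def by blast
    next
      fix p assume p: "p \<in> A \<inter> ({..<\<xi>} \<times> {..<\<xi>})"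
      obtain a b where ab: "p = (a, b)" by (cases p)
      have "\<pi> p < \<xi>" using x(3) p ab unfolding K_def by auto
      hence "\<pi> p \<in> d \<xi>" using x(1) p by blast
      thus "p \<in> G \<xi>" using p unfolding G_def by blast
    qed
    thus "{\<xi>. G \<xi> = A \<inter> ({..<\<xi>} \<times> {..<\<xi>})} \<inter> C \<noteq> {}" using x(2) by blast
  qed
  thus ?thesis by blast
qed

lemma z0_least: "(LEAST x::'a. True) \<le> y"
  by (rule Least_le) simp

lemma club_in_pnu:
  assumes F: "pnu_filter (F::'a set set)" and C: "club C"
  shows "C \<in> F"
proof -
  have filt: "is_filter F" using F unfolding pnu_filter_def proper_filter_def by blast
  have unif: "\<And>X. cobounded X \<Longrightarrow> X \<in> F" using F unfolding pnu_filter_def uniform_filter_def by blast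
  have norm: "\<And>X. (\<forall>\<alpha>. X \<alpha> \<in> F) \<Longrightarrow> diag_inter X \<in> F"
    using F unfolding pnu_filter_def normal_filter_def by blast
  define X where "X = (\<lambda>\<beta>. {\<xi>::'a. \<exists>\<gamma>\<in>C. \<beta> < \<gamma> \<and> \<gamma> < \<xi>})"
  have "X \<beta> \<in> F" for \<beta>
  proof (rule unif)
    obtain \<gamma> where g: "\<gamma> \<in> C" "\<beta> < \<gamma>" using club_next[OF C] by blast
    obtain s where s: "\<gamma> < s" using no_max by blast
    have "\<forall>\<zeta>. \<zeta> \<notin> X \<beta> \<longrightarrow> \<zeta> < s"
    proof (intro allI impI)
      fix \<zeta> assume "\<zeta> \<notin> X \<beta>"
      hence "\<not> \<gamma> < \<zeta>" using g unfolding X_def by blast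
      thus "\<zeta> < s" using s by simp
    qed
    thus "cobounded (X \<beta>)" unfolding cobounded_def by blast
  qed
  hence dX: "diag_inter X \<in> F" using norm by blast
  define z0 where "z0 = (LEAST x::'a. True)"
  have Y: "{\<xi>. z0 < \<xi>} \<in> F"
  proof (rule unif)
    obtain s where s: "z0 < s" using no_max by blast
    have "\<forall>\<zeta>. \<zeta> \<notin> {\<xi>. z0 < \<xi>} \<longrightarrow> \<zeta> < s"
    proof (intro allI impI)
      fix \<zeta> assume "\<zeta> \<notin> {\<xi>. z0 < \<xi>}"
      hence "\<zeta> \<le> z0" by simp
      moreover have "z0 \<le> \<zeta>" unfolding z0_def by (rule z0_least)
      ultimately show "\<zeta> < s" using s by simp
    qed
    thus "cobounded {\<xi>. z0 < \<xi>}" unfolding cobounded_def by blast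
  qed
  have I: "diag_inter X \<inter> {\<xi>. z0 < \<xi>} \<in> F" using filt dX Y unfolding is_filter_def by blast
  have "diag_inter X \<inter> {\<xi>. z0 < \<xi>} \<subseteq> C"
  proof
    fix \<xi> assume a: "\<xi> \<in> diag_inter X \<inter> {\<xi>. z0 < \<xi>}"
    show "\<xi> \<in> C"
      using C unfolding club_def closed_set_def
    proof (elim conjE allE impE)
      show "(\<exists>b. b < \<xi>) \<and> (\<forall>b<\<xi>. \<exists>\<gamma>\<in>C. b < \<gamma> \<and> \<gamma> < \<xi>)"
        using a unfolding diag_inter_def X_def by blast
    qed
  qed
  thus ?thesis using I filt unfolding is_filter_def by blast
qed

lemma pnu_stationary:
  assumes F: "pnu_filter (F::'a set set)" and S: "S \<in> F"
  shows "stationary S"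
  unfolding stationary_def
proof (intro allI impI)
  fix C :: "'a set" assume "club C"
  hence "C \<in> F" using club_in_pnu F by blast
  hence "S \<inter> C \<in> F" using S F unfolding pnu_filter_def proper_filter_def is_filter_def by blast
  thus "S \<inter> C \<noteq> {}" using F unfolding pnu_filter_def proper_filter_def by auto
qed


lemma diamond_imp_tree:
  assumes dia: "diamond TYPE('a)"
  shows "\<exists>D::'a \<Rightarrow> 'a set \<Rightarrow> 'a set. diamond_tree D"
proof -
  obtain G :: "'a \<Rightarrow> ('a \<times> 'a) set" where G: "\<forall>A. stationary {\<xi>. G \<xi> = A \<inter> ({..<\<xi>} \<times> {..<\<xi>})}"
    using diamond2[OF dia] by blast
  obtain \<pi> :: "'a \<times> 'a \<Rightarrow> 'a" where pi: "inj \<pi>" using pairing by blast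
  define z0 where "z0 = (LEAST x::'a. True)"
  have z0: "z0 \<le> y" for y unfolding z0_def by (rule z0_least)
  obtain e where e: "z0 < e" using no_max by blast
  have ne: "e \<noteq> z0" using e by simp
  define T where "T = (\<lambda>\<xi> \<alpha>. {x. (\<pi> (\<alpha>, z0), x) \<in> G \<xi>})"
  define B where "B = (\<lambda>\<xi> \<alpha>. {x. (\<pi> (\<alpha>, e), x) \<in> G \<xi>})"
  define D where "D = (\<lambda>\<xi> t. if \<exists>\<alpha><\<xi>. T \<xi> \<alpha> = t then B \<xi> (LEAST \<alpha>. \<alpha> < \<xi> \<and> T \<xi> \<alpha> = t) else {})"
  have "diamond_tree D" unfolding diamond_tree_def
  proof
    fix a :: "'a set \<Rightarrow> 'a set"
    define S where "S = (\<lambda>s. {\<xi>. D \<xi> (s \<inter> {..<\<xi>}) = a s \<inter> {..<\<xi>}})"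
    define F where "F = {X. \<exists>\<sigma>::'a \<Rightarrow> 'a set. \<exists>C. club C \<and> (\<forall>\<xi>\<in>C. (\<forall>\<alpha><\<xi>. \<xi> \<in> S (\<sigma> \<alpha>)) \<longrightarrow> \<xi> \<in> X)}"
    have Fintro: "X \<in> F" if "club C" "\<forall>\<xi>\<in>C. (\<forall>\<alpha><\<xi>. \<xi> \<in> S (\<sigma> \<alpha>)) \<longrightarrow> \<xi> \<in> X" for X C \<sigma>
      unfolding F_def using that by blast
    have prp: "\<exists>\<xi>\<in>C. \<forall>\<alpha><\<xi>. \<xi> \<in> S (\<sigma> \<alpha>)" if C: "club C" for \<sigma> C
    proof -
      define At where "At = {(\<pi> (\<alpha>, z0), x) | \<alpha> x. x \<in> \<sigma> \<alpha>} \<union> {(\<pi> (\<alpha>, e), x) | \<alpha> x. x \<in> a (\<sigma> \<alpha>)}"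
      define \<delta> where "\<delta> = (\<lambda>\<alpha> \<beta>. if \<sigma> \<alpha> = \<sigma> \<beta> then z0 else (SOME x. (x \<in> \<sigma> \<alpha>) \<noteq> (x \<in> \<sigma> \<beta>)))"
      define K1 where "K1 = {\<xi>::'a. \<forall>\<alpha><\<xi>. \<forall>\<beta><\<xi>. \<pi> (\<alpha>, \<beta>) < \<xi>}"
      define K2 where "K2 = {\<xi>::'a. \<forall>\<alpha><\<xi>. \<forall>\<beta><\<xi>. \<delta> \<alpha> \<beta> < \<xi>}"
      define K3 where "K3 = {\<xi>::'a. e < \<xi>}"
      have K: "club (C \<inter> (K1 \<inter> (K2 \<inter> K3)))"
        unfolding K1_def K2_def K3_def
        by (intro club_Int C club_closure2 club_gt)
      have "{\<xi>. G \<xi> = At \<inter> ({..<\<xi>} \<times> {..<\<xi>})} \<inter> (C \<inter> (K1 \<inter> (K2 \<inter> K3))) \<noteq> {}"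
        using G K unfolding stationary_def by blast
      then obtain \<xi> where Gx: "G \<xi> = At \<inter> ({..<\<xi>} \<times> {..<\<xi>})" and xC: "\<xi> \<in> C"
        and x1: "\<xi> \<in> K1" and x2: "\<xi> \<in> K2" and x3: "\<xi> \<in> K3" by blast
      have ex: "e < \<xi>" using x3 unfolding K3_def by simp
      have zx: "z0 < \<xi>" using e ex by simp
      have Tx: "T \<xi> \<beta> = \<sigma> \<beta> \<inter> {..<\<xi>}" if b: "\<beta> < \<xi>" for \<beta>
      proof -
        have "\<pi> (\<beta>, z0) < \<xi>" using x1 b zx unfolding K1_def by blast
        thus ?thesis unfolding T_def Gx At_def using ne by (auto simp: inj_eq[OF pi])
      qed
      have Bx: "B \<xi> \<beta> = a (\<sigma> \<beta>) \<inter> {..<\<xi>}" if b: "\<beta> < \<xi>" for \<beta>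
      proof -
        have "\<pi> (\<beta>, e) < \<xi>" using x1 b ex unfolding K1_def by blast
        thus ?thesis unfolding B_def Gx At_def using ne by (auto simp: inj_eq[OF pi])
      qed
      have "\<xi> \<in> S (\<sigma> \<alpha>)" if al: "\<alpha> < \<xi>" for \<alpha>
      proof -
        let ?t = "\<sigma> \<alpha> \<inter> {..<\<xi>}"
        have exi: "\<exists>\<beta><\<xi>. T \<xi> \<beta> = ?t" using al Tx by blast
        define \<beta>0 where "\<beta>0 = (LEAST \<beta>. \<beta> < \<xi> \<and> T \<xi> \<beta> = ?t)"
        have b0: "\<beta>0 < \<xi> \<and> T \<xi> \<beta>0 = ?t" unfolding \<beta>0_def
          by (rule LeastI[of _ \<alpha>]) (use al Tx in blast)
        hence eqr: "\<sigma> \<beta>0 \<inter> {..<\<xi>} = ?t" using Tx[of \<beta>0] by argo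
        have "\<sigma> \<beta>0 = \<sigma> \<alpha>"
        proof (rule ccontr)
          assume nq: "\<sigma> \<beta>0 \<noteq> \<sigma> \<alpha>"
          hence "\<exists>x. (x \<in> \<sigma> \<beta>0) \<noteq> (x \<in> \<sigma> \<alpha>)" by blast
          hence s1: "((SOME x. (x \<in> \<sigma> \<beta>0) \<noteq> (x \<in> \<sigma> \<alpha>)) \<in> \<sigma> \<beta>0) \<noteq> ((SOME x. (x \<in> \<sigma> \<beta>0) \<noteq> (x \<in> \<sigma> \<alpha>)) \<in> \<sigma> \<alpha>)"
            by (rule someI_ex)
          have s2: "\<delta> \<beta>0 \<alpha> = (SOME x. (x \<in> \<sigma> \<beta>0) \<noteq> (x \<in> \<sigma> \<alpha>))"
            unfolding \<delta>_def using nq by (simp only: if_False)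
          have d1: "(\<delta> \<beta>0 \<alpha> \<in> \<sigma> \<beta>0) \<noteq> (\<delta> \<beta>0 \<alpha> \<in> \<sigma> \<alpha>)"
            unfolding s2 by (rule s1)
          have "\<delta> \<beta>0 \<alpha> < \<xi>" using x2 b0 al unfolding K2_def by blast
          thus False using d1 eqr by blast
        qed
        have "D \<xi> ?t = B \<xi> \<beta>0" unfolding D_def \<beta>0_def using exi by simp
        also have "\<dots> = a (\<sigma> \<alpha>) \<inter> {..<\<xi>}" using Bx b0 \<open>\<sigma> \<beta>0 = \<sigma> \<alpha>\<close> by simp
        finally show ?thesis unfolding S_def by simp
      qed
      thus ?thesis using xC by blast
    qed
    have norm: "diag_inter X \<in> F" if X: "\<forall>\<beta>. X \<beta> \<in> F" for X
    proof -
      have "\<forall>\<beta>. \<exists>p. club (snd p) \<and> (\<forall>\<xi>\<in>snd p. (\<forall>\<alpha><\<xi>. \<xi> \<in> S (fst p \<alpha>)) \<longrightarrow> \<xi> \<in> X \<beta>)"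
      proof
        fix \<beta>
        obtain \<sigma> C where "club C \<and> (\<forall>\<xi>\<in>C. (\<forall>\<alpha><\<xi>. \<xi> \<in> S (\<sigma> \<alpha>)) \<longrightarrow> \<xi> \<in> X \<beta>)"
          using X unfolding F_def by blast
        thus "\<exists>p. club (snd p) \<and> (\<forall>\<xi>\<in>snd p. (\<forall>\<alpha><\<xi>. \<xi> \<in> S (fst p \<alpha>)) \<longrightarrow> \<xi> \<in> X \<beta>)"
          by (intro exI[of _ "(\<sigma>, C)"]) simp
      qed
      hence "\<exists>f. \<forall>\<beta>. club (snd (f \<beta>)) \<and> (\<forall>\<xi>\<in>snd (f \<beta>). (\<forall>\<alpha><\<xi>. \<xi> \<in> S (fst (f \<beta>) \<alpha>)) \<longrightarrow> \<xi> \<in> X \<beta>)"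
        by (rule choice)
      then obtain f where f: "\<forall>\<beta>. club (snd (f \<beta>)) \<and> (\<forall>\<xi>\<in>snd (f \<beta>). (\<forall>\<alpha><\<xi>. \<xi> \<in> S (fst (f \<beta>) \<alpha>)) \<longrightarrow> \<xi> \<in> X \<beta>)"
        by blast
      define \<sigma> where "\<sigma> = (\<lambda>\<gamma>. fst (f (fst (inv \<pi> \<gamma>))) (snd (inv \<pi> \<gamma>)))"
      define K1 where "K1 = {\<xi>::'a. \<forall>\<alpha><\<xi>. \<forall>\<beta><\<xi>. \<pi> (\<alpha>, \<beta>) < \<xi>}"
      define C where "C = {\<xi>. \<forall>\<beta><\<xi>. \<xi> \<in> snd (f \<beta>)} \<inter> K1"
      have C: "club C" unfolding C_def K1_def
        by (intro club_Int club_closure2 club_diag) (use f in blast)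
      have "\<xi> \<in> diag_inter X" if xi: "\<xi> \<in> C" "\<forall>\<gamma><\<xi>. \<xi> \<in> S (\<sigma> \<gamma>)" for \<xi>
        unfolding diag_inter_def
      proof (simp, intro allI impI)
        fix \<beta> assume b: "\<beta> < \<xi>"
        have inC: "\<xi> \<in> snd (f \<beta>)" using xi(1) b unfolding C_def by blast
        have "\<xi> \<in> S (fst (f \<beta>) \<alpha>)" if al: "\<alpha> < \<xi>" for \<alpha>
        proof -
          have "\<pi> (\<beta>, \<alpha>) < \<xi>" using xi(1) b al unfolding C_def K1_def by blast
          hence "\<xi> \<in> S (\<sigma> (\<pi> (\<beta>, \<alpha>)))" using xi(2) by blast
          thus ?thesis unfolding \<sigma>_def using inv_f_f[OF pi] by simp
        qed
        thus "\<xi> \<in> X \<beta>" using f inC by blast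
      qed
      thus ?thesis using Fintro[OF C] by blast
    qed
    have filt: "is_filter F" unfolding is_filter_def
    proof (intro conjI allI impI)
      show "UNIV \<in> F" using Fintro[OF club_gt[of z0], where X=UNIV and \<sigma>="\<lambda>_. {}"] by simp
    next
      fix X Y assume "X \<in> F" "X \<subseteq> Y"
      then obtain \<sigma> C where "club C" "\<forall>\<xi>\<in>C. (\<forall>\<alpha><\<xi>. \<xi> \<in> S (\<sigma> \<alpha>)) \<longrightarrow> \<xi> \<in> X"
        unfolding F_def by blast
      thus "Y \<in> F" using Fintro[where C=C and X=Y and \<sigma>=\<sigma>] \<open>X \<subseteq> Y\<close> by blast
    next
      fix X Y assume XY: "X \<in> F" "Y \<in> F"
      define Z where "Z = (\<lambda>\<beta>. if \<beta> = z0 then X else Y)"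
      have "diag_inter Z \<in> F" using norm XY unfolding Z_def by simp
      then obtain \<sigma> C where sC: "club C" "\<forall>\<xi>\<in>C. (\<forall>\<alpha><\<xi>. \<xi> \<in> S (\<sigma> \<alpha>)) \<longrightarrow> \<xi> \<in> diag_inter Z"
        unfolding F_def by blast
      have "club (C \<inter> {\<xi>. e < \<xi>})" by (intro club_Int sC club_gt)
      moreover have "\<forall>\<xi>\<in>C \<inter> {\<xi>. e < \<xi>}. (\<forall>\<alpha><\<xi>. \<xi> \<in> S (\<sigma> \<alpha>)) \<longrightarrow> \<xi> \<in> X \<inter> Y"
      proof (intro ballI impI)
        fix \<xi> assume xi: "\<xi> \<in> C \<inter> {\<xi>. e < \<xi>}" "\<forall>\<alpha><\<xi>. \<xi> \<in> S (\<sigma> \<alpha>)"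
        hence dz: "\<xi> \<in> diag_inter Z" using sC by blast
        have "e < \<xi>" using xi by simp
        hence "z0 < \<xi>" using e by simp
        hence "\<xi> \<in> Z z0" using dz unfolding diag_inter_def by blast
        hence "\<xi> \<in> X" unfolding Z_def by simp
        have "\<xi> \<in> Z e" using dz \<open>e < \<xi>\<close> unfolding diag_inter_def by blast
        hence "\<xi> \<in> Y" using ne unfolding Z_def by simp
        with \<open>\<xi> \<in> X\<close> show "\<xi> \<in> X \<inter> Y" by blast
      qed
      ultimately show "X \<inter> Y \<in> F" by (rule Fintro)
    qed
    have "{} \<notin> F"
    proof
      assume "{} \<in> F"
      then obtain \<sigma> C where "club C" "\<forall>\<xi>\<in>C. (\<forall>\<alpha><\<xi>. \<xi> \<in> S (\<sigma> \<alpha>)) \<longrightarrow> \<xi> \<in> {}"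
        unfolding F_def by blast
      thus False using prp[of C \<sigma>] by blast
    qed
    hence pf: "proper_filter F" using filt unfolding proper_filter_def by blast
    have nf: "normal_filter F" unfolding normal_filter_def using norm by blast
    have uf: "uniform_filter F" unfolding uniform_filter_def
    proof (intro allI impI)
      fix X :: "'a set" assume "cobounded X"
      then obtain \<beta> where b: "\<forall>\<gamma>. \<gamma> \<notin> X \<longrightarrow> \<gamma> < \<beta>" unfolding cobounded_def by blast
      have "\<forall>\<xi>\<in>{\<xi>. \<beta> < \<xi>}. (\<forall>\<alpha><\<xi>. \<xi> \<in> S ((\<lambda>_. {} :: 'a set) \<alpha>)) \<longrightarrow> \<xi> \<in> X"
      proof (intro ballI impI)
        fix \<xi> assume xi: "\<xi> \<in> {\<xi>. \<beta> < \<xi>}"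
        show "\<xi> \<in> X"
        proof (rule ccontr)
          assume "\<xi> \<notin> X"
          hence "\<xi> < \<beta>" using b by blast
          thus False using xi by simp
        qed
      qed
      thus "X \<in> F" by (rule Fintro[OF club_gt])
    qed
    have sF: "S s \<in> F" for s
    proof -
      have "\<forall>\<xi>\<in>{\<xi>. z0 < \<xi>}. (\<forall>\<alpha><\<xi>. \<xi> \<in> S ((\<lambda>_. s) \<alpha>)) \<longrightarrow> \<xi> \<in> S s"
      proof (intro ballI impI)
        fix \<xi> assume a1: "\<xi> \<in> {\<xi>. z0 < \<xi>}" and a2: "\<forall>\<alpha><\<xi>. \<xi> \<in> S ((\<lambda>_. s) \<alpha>)"
        have "z0 < \<xi>" using a1 by simp
        from a2[rule_format, OF this] show "\<xi> \<in> S s" by simp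
      qed
      thus ?thesis by (rule Fintro[OF club_gt])
    qed
    have "\<forall>s. {\<xi>. D \<xi> (s \<inter> {..<\<xi>}) = a s \<inter> {..<\<xi>}} \<in> F"
    proof
      fix s show "{\<xi>. D \<xi> (s \<inter> {..<\<xi>}) = a s \<inter> {..<\<xi>}} \<in> F" using sF[of s] unfolding S_def .
    qed
    moreover have "pnu_filter F" unfolding pnu_filter_def using pf nf uf by blast
    ultimately show "\<exists>F. pnu_filter F \<and> (\<forall>s. {\<xi>. D \<xi> (s \<inter> {..<\<xi>}) = a s \<inter> {..<\<xi>}} \<in> F)" by (intro exI[of _ F]) simp
  qed
  thus ?thesis by blast
qed


lemma jd_imp_diamond:
  assumes jd: "joint_diamond (d :: 'i \<Rightarrow> 'a \<Rightarrow> 'a set)"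
  shows "diamond TYPE('a)"
proof -
  define d0 where "d0 = d undefined"
  have kl: "kappa_list d0" using jd unfolding joint_diamond_def d0_def by blast
  have "stationary {\<alpha>. A \<inter> {..<\<alpha>} = d0 \<alpha>}" for A
  proof -
    obtain F where F: "pnu_filter F" "\<forall>i. {\<xi>. d i \<xi> = (\<lambda>_. A) i \<inter> {..<\<xi>}} \<in> F"
      using jd[unfolded joint_diamond_def, THEN conjunct2, rule_format, of "\<lambda>_. A"] by blast
    have "{\<xi>. d undefined \<xi> = A \<inter> {..<\<xi>}} \<in> F" using F(2) by blast
    moreover have "{\<xi>. d undefined \<xi> = A \<inter> {..<\<xi>}} = {\<alpha>. A \<inter> {..<\<alpha>} = d0 \<alpha>}"
      unfolding d0_def by auto
    ultimately show ?thesis using pnu_stationary[OF F(1)] by simp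
  qed
  thus ?thesis unfolding diamond_def using kl by blast
qed

lemma tree_imp_diamond:
  assumes T: "diamond_tree (D :: 'a \<Rightarrow> 'a set \<Rightarrow> 'a set)"
  shows "diamond TYPE('a)"
proof -
  define d0 where "d0 = (\<lambda>\<xi>. D \<xi> {} \<inter> {..<\<xi>})"
  have kl: "kappa_list d0" unfolding kappa_list_def d0_def by blast
  have "stationary {\<alpha>. A \<inter> {..<\<alpha>} = d0 \<alpha>}" for A
  proof -
    obtain F where F: "pnu_filter F" "\<forall>s. {\<xi>. D \<xi> (s \<inter> {..<\<xi>}) = (\<lambda>_. A) s \<inter> {..<\<xi>}} \<in> F"
      using T[unfolded diamond_tree_def, rule_format, of "\<lambda>_. A"] by blast
    have "{\<xi>. D \<xi> ({} \<inter> {..<\<xi>}) = A \<inter> {..<\<xi>}} \<in> F" using F(2) by blast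
    hence S: "{\<xi>. D \<xi> {} = A \<inter> {..<\<xi>}} \<in> F" by simp
    have "{\<xi>. D \<xi> {} = A \<inter> {..<\<xi>}} \<subseteq> {\<alpha>. A \<inter> {..<\<alpha>} = d0 \<alpha>}"
      unfolding d0_def by auto
    hence "{\<alpha>. A \<inter> {..<\<alpha>} = d0 \<alpha>} \<in> F"
      using S F(1) unfolding pnu_filter_def proper_filter_def is_filter_def by blast
    thus ?thesis using pnu_stationary[OF F(1)] by simp
  qed
  thus ?thesis unfolding diamond_def using kl by blast
qed

end

lemma tree_imp_jd2:
  assumes T: "diamond_tree (D :: 'a::wellorder \<Rightarrow> 'a set \<Rightarrow> 'a set)"
  shows "\<exists>d :: 'a set \<Rightarrow> 'a \<Rightarrow> 'a set. joint_diamond d"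
proof -
  define d where "d = (\<lambda>s \<xi>. D \<xi> (s \<inter> {..<\<xi>}) \<inter> {..<\<xi>})"
  have "joint_diamond d" unfolding joint_diamond_def
  proof (intro conjI allI)
    fix i show "kappa_list (d i)" unfolding kappa_list_def d_def by blast
  next
    fix a :: "'a set \<Rightarrow> 'a set"
    obtain F where F: "pnu_filter F" "\<forall>s. {\<xi>. D \<xi> (s \<inter> {..<\<xi>}) = a s \<inter> {..<\<xi>}} \<in> F"
      using T unfolding diamond_tree_def by blast
    have "{\<xi>. d s \<xi> = a s \<inter> {..<\<xi>}} \<in> F" for s
    proof -
      have "{\<xi>. D \<xi> (s \<inter> {..<\<xi>}) = a s \<inter> {..<\<xi>}} \<subseteq> {\<xi>. d s \<xi> = a s \<inter> {..<\<xi>}}"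
        unfolding d_def by auto
      thus ?thesis using F unfolding pnu_filter_def proper_filter_def is_filter_def by blast
    qed
    thus "\<exists>F. pnu_filter F \<and> (\<forall>i. {\<xi>. d i \<xi> = a i \<inter> {..<\<xi>}} \<in> F)" using F(1) by blast
  qed
  thus ?thesis by blast
qed

lemma jd2_imp_jd1:
  assumes jd: "joint_diamond (d :: 'a::wellorder set \<Rightarrow> 'a \<Rightarrow> 'a set)"
  shows "\<exists>d' :: 'a \<Rightarrow> 'a \<Rightarrow> 'a set. joint_diamond d'"
proof -
  define d' where "d' = (\<lambda>\<alpha>. d {\<alpha>})"
  have "joint_diamond d'" unfolding joint_diamond_def
  proof (intro conjI allI)
    fix i show "kappa_list (d' i)" using jd unfolding d'_def joint_diamond_def by blast
  next
    fix a :: "'a \<Rightarrow> 'a set"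
    obtain F where F: "pnu_filter F" "\<forall>i. {\<xi>. d i \<xi> = (\<lambda>s. a (the_elem s)) i \<inter> {..<\<xi>}} \<in> F"
      using jd[unfolded joint_diamond_def, THEN conjunct2, rule_format, of "\<lambda>s. a (the_elem s)"] by blast
    have "{\<xi>. d' i \<xi> = a i \<inter> {..<\<xi>}} \<in> F" for i
      using F(2)[rule_format, of "{i}"] unfolding d'_def by simp
    thus "\<exists>F. pnu_filter F \<and> (\<forall>i. {\<xi>. d' i \<xi> = a i \<inter> {..<\<xi>}} \<in> F)" using F(1) by blast
  qed
  thus ?thesis by blast
qed

theorem theorem5p8:
  assumes "uncountable_regular_cardinal TYPE('a::wellorder)"
  shows "(diamond TYPE('a) \<longleftrightarrow> (\<exists>d :: 'a \<Rightarrow> 'a \<Rightarrow> 'a set. joint_diamond d))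
       \<and> (diamond TYPE('a) \<longleftrightarrow> (\<exists>d :: 'a set \<Rightarrow> 'a \<Rightarrow> 'a set. joint_diamond d))
       \<and> (diamond TYPE('a) \<longleftrightarrow> (\<exists>D :: 'a \<Rightarrow> 'a set \<Rightarrow> 'a set. diamond_tree D))"
proof -
  have t: "diamond TYPE('a) \<Longrightarrow> \<exists>D :: 'a \<Rightarrow> 'a set \<Rightarrow> 'a set. diamond_tree D"
    using diamond_imp_tree[OF assms] by blast
  have t2: "diamond TYPE('a) \<Longrightarrow> \<exists>d :: 'a set \<Rightarrow> 'a \<Rightarrow> 'a set. joint_diamond d"
    using t tree_imp_jd2 by blast
  have t1: "diamond TYPE('a) \<Longrightarrow> \<exists>d :: 'a \<Rightarrow> 'a \<Rightarrow> 'a set. joint_diamond d"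
    using t2 jd2_imp_jd1 by blast
  have r1: "(\<exists>d :: 'a \<Rightarrow> 'a \<Rightarrow> 'a set. joint_diamond d) \<Longrightarrow> diamond TYPE('a)"
    using jd_imp_diamond[OF assms] by blast
  have r2: "(\<exists>d :: 'a set \<Rightarrow> 'a \<Rightarrow> 'a set. joint_diamond d) \<Longrightarrow> diamond TYPE('a)"
    using jd_imp_diamond[OF assms] by blast
  have r3: "(\<exists>D :: 'a \<Rightarrow> 'a set \<Rightarrow> 'a set. diamond_tree D) \<Longrightarrow> diamond TYPE('a)"
    using tree_imp_diamond[OF assms] by blast
  show ?thesis using t t1 t2 r1 r2 r3 by blast
qed

end
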